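(* Let $E=\bigcap_{i=1}^\ell\{x\in M: f_i(x)\le0\}$ be a regular intersection (all $I_i=(-\infty,0]$). Then $E$ is a regular closed subset of $M$: its interior in $M$ is $\operatorname{int}E=\bigcap_{i=1}^\ell\{x\in M: f_i(x)<0\}$, and $E=\overline{\operatorname{int}E}$ (closure in $M$).
   Context: $M\subset\mathbb{R}^d$ is a compact smooth submanifold without boundary with the induced metric. "Regular intersection" means: $E\neq\emptyset$, each $f_i:M\to\mathbb{R}$ smooth with $0$ a regular value, and for some $\mu>0,\Lambda\ge0$: (R1) for any indices $i_1<\dots<i_k$, the differential of $(f_{i_1},\dots,f_{i_k}):M\to\mathbb{R}^k$ is surjective at every point of $\{f_{i_1}=\dots=f_{i_k}=0\}\cap E$ with smallest nonzero singular value $\ge\mu$; (R2) the Hessian operator norms of all $f_i$ on $M$ are $\le\Lambda$. *)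

theory Defs
  imports "HOL-Analysis.Analysis"
begin

fun dd :: "'a::real_normed_vector list \<Rightarrow> ('a \<Rightarrow> 'b::real_normed_vector) \<Rightarrow> 'a \<Rightarrow> 'b" where
  "dd [] f = f"
| "dd (v # vs) f = (\<lambda>x. frechet_derivative (dd vs f) (at x) v)"

definition smooth_on :: "'a::real_normed_vector set \<Rightarrow> ('a \<Rightarrow> 'b::real_normed_vector) \<Rightarrow> bool" where
  "smooth_on U f \<longleftrightarrow> open U \<and> (\<forall>vs. \<forall>x\<in>U. dd vs f differentiable (at x))"

definition smooth_submanifold :: "'a::euclidean_space set \<Rightarrow> bool" where
  "smooth_submanifold M \<longleftrightarrow>
     (\<forall>p\<in>M. \<exists>U V (\<phi>::'a \<Rightarrow> 'a) \<psi> S.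
        open U \<and> open V \<and> p \<in> U \<and> subspace S \<and>
        smooth_on U \<phi> \<and> smooth_on V \<psi> \<and> \<phi> ` U = V \<and>
        (\<forall>x\<in>U. \<psi> (\<phi> x) = x) \<and> (\<forall>y\<in>V. \<phi> (\<psi> y) = y) \<and>
        \<phi> ` (M \<inter> U) = V \<inter> S)"

definition smooth_fun_on :: "'a::euclidean_space set \<Rightarrow> ('a \<Rightarrow> real) \<Rightarrow> bool" where
  "smooth_fun_on M f \<longleftrightarrow>
     (\<forall>p\<in>M. \<exists>U g. open U \<and> p \<in> U \<and> smooth_on U g \<and> (\<forall>x\<in>M \<inter> U. f x = g x))"

definition tangent_space :: "'a::euclidean_space set \<Rightarrow> 'a \<Rightarrow> 'a set" where
  "tangent_space M p = {v. \<exists>\<gamma>::real \<Rightarrow> 'a. (\<forall>t. \<gamma> t \<in> M) \<and> \<gamma> 0 = p \<and> (\<gamma> has_vector_derivative v) (at 0)}"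

text \<open>Differential of f : M -> R at x (only its values on the tangent space are meaningful).\<close>
definition mdiff :: "'a::euclidean_space set \<Rightarrow> ('a \<Rightarrow> real) \<Rightarrow> 'a \<Rightarrow> 'a \<Rightarrow> real" where
  "mdiff M f x = (SOME L. \<forall>(\<gamma>::real \<Rightarrow> 'a) w. (\<forall>t. \<gamma> t \<in> M) \<and> \<gamma> 0 = x \<and>
       (\<gamma> has_vector_derivative w) (at 0) \<longrightarrow> ((f \<circ> \<gamma>) has_real_derivative L w) (at 0))"

definition regular_value0 :: "'a::euclidean_space set \<Rightarrow> ('a \<Rightarrow> real) \<Rightarrow> bool" where
  "regular_value0 M f \<longleftrightarrow>
     (\<forall>x\<in>M. f x = 0 \<longrightarrow> (\<exists>v\<in>tangent_space M x. mdiff M f x v \<noteq> 0))"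

text \<open>The differential of (f_j)_{j in J} : M -> R^J at x is surjective and its smallest
  nonzero singular value is at least mu.  For a linear map A onto R^J this is equivalent to:
  every y in R^J has a preimage v in T_xM with mu * |v| <= |y| (the pseudo-inverse has
  operator norm 1/sigma_min).\<close>
definition diff_surj_sv_ge :: "'a::euclidean_space set \<Rightarrow> (nat \<Rightarrow> 'a \<Rightarrow> real) \<Rightarrow> nat set \<Rightarrow> 'a \<Rightarrow> real \<Rightarrow> bool" where
  "diff_surj_sv_ge M f J x \<mu> \<longleftrightarrow>
     (\<forall>y::nat \<Rightarrow> real. \<exists>v\<in>tangent_space M x.
        (\<forall>j\<in>J. mdiff M (f j) x v = y j) \<and> \<mu> * norm v \<le> sqrt (\<Sum>j\<in>J. (y j)\<^sup>2))"

definition geodesic :: "'a::euclidean_space set \<Rightarrow> (real \<Rightarrow> 'a) \<Rightarrow> bool" where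
  "geodesic M \<gamma> \<longleftrightarrow> (\<forall>t. \<gamma> t \<in> M) \<and> (\<forall>t. \<gamma> differentiable (at t)) \<and>
     (\<forall>t. (\<lambda>s. vector_derivative \<gamma> (at s)) differentiable (at t)) \<and>
     (\<forall>t. \<forall>v\<in>tangent_space M (\<gamma> t).
         vector_derivative (\<lambda>s. vector_derivative \<gamma> (at s)) (at t) \<bullet> v = 0)"

text \<open>Operator norm of the Riemannian Hessian of f is at most Lambda at every point of M:
  Hess f(v,v) = (f o gamma)''(0) for the geodesic with gamma'(0) = v, and the operator norm of
  a symmetric bilinear form is sup over unit v of |Hess f(v,v)|.\<close>
definition hessian_norm_le :: "'a::euclidean_space set \<Rightarrow> ('a \<Rightarrow> real) \<Rightarrow> real \<Rightarrow> bool" where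
  "hessian_norm_le M f \<Lambda> \<longleftrightarrow>
     (\<forall>\<gamma> t. geodesic M \<gamma> \<longrightarrow>
        \<bar>deriv (deriv (f \<circ> \<gamma>)) t\<bar> \<le> \<Lambda> * (norm (vector_derivative \<gamma> (at t)))\<^sup>2)"

definition sublevel_intersection :: "'a set \<Rightarrow> (nat \<Rightarrow> 'a \<Rightarrow> real) \<Rightarrow> nat \<Rightarrow> 'a set" where
  "sublevel_intersection M f l = {x\<in>M. \<forall>i\<in>{1..l}. f i x \<le> 0}"

definition regular_intersection :: "'a::euclidean_space set \<Rightarrow> (nat \<Rightarrow> 'a \<Rightarrow> real) \<Rightarrow> nat \<Rightarrow> bool" where
  "regular_intersection M f l \<longleftrightarrow>
     (let E = sublevel_intersection M f l in
      E \<noteq> {} \<and>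
      (\<forall>i\<in>{1..l}. smooth_fun_on M (f i) \<and> regular_value0 M (f i)) \<and>
      (\<exists>\<mu>>0. \<exists>\<Lambda>\<ge>0.
         (\<forall>J. J \<subseteq> {1..l} \<and> J \<noteq> {} \<longrightarrow>
            (\<forall>x\<in>E. (\<forall>j\<in>J. f j x = 0) \<longrightarrow> diff_surj_sv_ge M f J x \<mu>)) \<and>
         (\<forall>i\<in>{1..l}. hessian_norm_le M (f i) \<Lambda>)))"

end

theory Submission
  imports Defs
begin

lemma sfo_local:
  assumes "smooth_fun_on M f" "p \<in> M"
  obtains U g where "open U" "p \<in> U" "\<forall>x\<in>M \<inter> U. f x = g x" "g differentiable (at p)"
proof -
  obtain U g where "open U" "p \<in> U" "smooth_on U g" "\<forall>x\<in>M \<inter> U. f x = g x"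
    using assms unfolding smooth_fun_on_def by blast
  moreover have "g differentiable (at p)"
    using \<open>smooth_on U g\<close> \<open>p \<in> U\<close> unfolding smooth_on_def
    by (metis dd.simps(1))
  ultimately show ?thesis using that by blast
qed

lemma sfo_cont:
  assumes "smooth_fun_on M f"
  shows "continuous_on M f"
  unfolding continuous_on_eq_continuous_within
proof
  fix p assume p: "p \<in> M"
  obtain U g where U: "open U" "p \<in> U" "\<forall>x\<in>M \<inter> U. f x = g x" "g differentiable (at p)"
    using sfo_local[OF assms p] by blast
  have "isCont g p" using U(4) differentiable_imp_continuous_within by blast
  then have "(g \<longlongrightarrow> g p) (at p within M)"
    unfolding isCont_def by (rule tendsto_within_subset) simp
  moreover have "\<forall>\<^sub>F x in at p within M. g x = f x"
    unfolding eventually_at_topological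
  proof (intro exI[of _ U] conjI ballI impI)
    fix y assume "y \<in> U" "y \<noteq> p" "y \<in> M"
    then show "g y = f y" using U(3) by auto
  qed (use U in auto)
  ultimately have "(f \<longlongrightarrow> g p) (at p within M)" by (rule Lim_transform_eventually)
  then show "continuous (at p within M) f"
    using U p by (simp add: continuous_within)
qed

lemma mdiff_works:
  assumes "smooth_fun_on M f" "x \<in> M" "\<forall>t. \<gamma> t \<in> M" "\<gamma> 0 = x"
    "(\<gamma> has_vector_derivative w) (at 0)"
  shows "((f \<circ> \<gamma>) has_real_derivative mdiff M f x w) (at 0)"
proof -
  obtain U g where U: "open U" "x \<in> U" "\<forall>y\<in>M \<inter> U. f y = g y" "g differentiable (at x)"
    using sfo_local[OF assms(1,2)] by blast
  define G where "G = frechet_derivative g (at x)"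
  have gG: "(g has_derivative G) (at x)" using U(4) G_def frechet_derivative_works by blast
  have key: "((f \<circ> c) has_real_derivative G v) (at 0)"
    if c: "\<forall>t. c t \<in> M" "c 0 = x" "(c has_vector_derivative v) (at 0)" for c v
  proof -
    have "((g \<circ> c) has_vector_derivative G v) (at 0)"
      using vector_derivative_diff_chain_within[of c v 0 UNIV g G] gG c
      by (simp add: has_derivative_at_withinI)
    then have d: "((g \<circ> c) has_real_derivative G v) (at 0)"
      by (simp add: has_real_derivative_iff_has_vector_derivative)
    have "isCont c 0" using c(3) has_vector_derivative_continuous by blast
    then have "\<forall>\<^sub>F t in at 0. c t \<in> U"
      using U(1,2) c(2) unfolding isCont_def
      by (intro topological_tendstoD) auto
    then have "\<forall>\<^sub>F t in at 0. (g \<circ> c) t = (f \<circ> c) t"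
      by eventually_elim (use U(3) c(1) in auto)
    note ev = this
    have e0: "(g \<circ> c) 0 = (f \<circ> c) 0" using U(2,3) c(1,2) by auto
    show ?thesis
      using has_derivative_transform_eventually[OF d[unfolded has_field_derivative_def] ev e0 UNIV_I]
      unfolding has_field_derivative_def .
  qed
  have "\<exists>L. \<forall>(c::real \<Rightarrow> 'a) v. (\<forall>t. c t \<in> M) \<and> c 0 = x \<and>
       (c has_vector_derivative v) (at 0) \<longrightarrow> ((f \<circ> c) has_real_derivative L v) (at 0)"
    by (intro exI[of _ G] allI impI) (use key in presburger)
  then have "\<forall>(c::real \<Rightarrow> 'a) v. (\<forall>t. c t \<in> M) \<and> c 0 = x \<and>
       (c has_vector_derivative v) (at 0) \<longrightarrow> ((f \<circ> c) has_real_derivative mdiff M f x v) (at 0)"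
    unfolding mdiff_def by (rule someI_ex)
  from this[rule_format, of \<gamma> w] show ?thesis using assms(3,4,5) by simp
qed

lemma ev_in:
  assumes "(\<gamma> has_vector_derivative w) (at 0)" "open U" "\<gamma> 0 \<in> U"
  shows "\<forall>\<^sub>F t in at 0 within S. \<gamma> t \<in> U"
proof -
  have "isCont \<gamma> 0" using assms(1) has_vector_derivative_continuous by blast
  then have "(\<gamma> \<longlongrightarrow> \<gamma> 0) (at 0 within S)"
    unfolding isCont_def by (rule tendsto_within_subset) simp
  then show ?thesis using assms(2,3) by (intro topological_tendstoD) auto
qed

theorem mainTheorem9:
  fixes M :: "'a::euclidean_space set" and f :: "nat \<Rightarrow> 'a \<Rightarrow> real" and l :: nat
  assumes "compact M" and "smooth_submanifold M"
    and "regular_intersection M f l"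
  shows "(top_of_set M) interior_of (sublevel_intersection M f l) = {x\<in>M. \<forall>i\<in>{1..l}. f i x < 0}
     \<and> (top_of_set M) closure_of ((top_of_set M) interior_of (sublevel_intersection M f l))
         = sublevel_intersection M f l"
proof -
  define E where "E = sublevel_intersection M f l"
  define I where "I = {x\<in>M. \<forall>i\<in>{1..l}. f i x < 0}"
  have sm: "\<forall>i\<in>{1..l}. smooth_fun_on M (f i) \<and> regular_value0 M (f i)"
    using assms(3) unfolding regular_intersection_def Let_def by blast
  obtain \<mu> where R1: "\<forall>J. J \<subseteq> {1..l} \<and> J \<noteq> {} \<longrightarrow>
            (\<forall>x\<in>E. (\<forall>j\<in>J. f j x = 0) \<longrightarrow> diff_surj_sv_ge M f J x \<mu>)"
    using assms(3) unfolding regular_intersection_def Let_def E_def by blast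
  have cont: "continuous_on M (f i)" if "i \<in> {1..l}" for i
    using sm that sfo_cont by blast
  have Edef: "E = {x\<in>M. \<forall>i\<in>{1..l}. f i x \<le> 0}"
    unfolding E_def sublevel_intersection_def by simp
  have IE: "I \<subseteq> E" unfolding I_def Edef by (auto intro: less_imp_le)
  have I_open: "openin (top_of_set M) I"
  proof -
    have "openin (top_of_set M) ((\<Inter>i\<in>{1..l}. M \<inter> f i -` {..<0}) \<inter> topspace (top_of_set M))"
      by (intro openin_INT) (simp_all add: continuous_openin_preimage_gen cont)
    moreover have "(\<Inter>i\<in>{1..l}. M \<inter> f i -` {..<0}) \<inter> topspace (top_of_set M) = I"
      unfolding I_def by auto
    ultimately show ?thesis by simp
  qed
  have E_closed: "closedin (top_of_set M) E"
  proof (cases "{1..l} = ({}::nat set)")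
    case True
    then have "E = M" unfolding Edef by auto
    then show ?thesis by simp
  next
    case False
    have "closedin (top_of_set M) (\<Inter>i\<in>{1..l}. M \<inter> f i -` {..0})"
    proof (intro closedin_INT)
      show "{1..l} \<noteq> {}" using False .
      fix i assume "i \<in> {1..l}"
      show "closedin (top_of_set M) (M \<inter> f i -` {..0})"
        by (rule continuous_closedin_preimage[OF cont[OF \<open>i \<in> {1..l}\<close>]]) simp
    qed
    moreover have "(\<Inter>i\<in>{1..l}. M \<inter> f i -` {..0}) = E"
      unfolding Edef using False by auto
    ultimately show ?thesis by simp
  qed
  have int1: "(top_of_set M) interior_of E \<subseteq> I"
  proof
    fix x assume "x \<in> (top_of_set M) interior_of E"
    then obtain T where T: "openin (top_of_set M) T" "x \<in> T" "T \<subseteq> E"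
      unfolding interior_of_def by blast
    obtain U' where U': "open U'" "T = M \<inter> U'" using T(1) openin_open by blast
    have xE: "x \<in> E" using T by blast
    then have xM: "x \<in> M" and le: "\<forall>i\<in>{1..l}. f i x \<le> 0" unfolding Edef by auto
    have "f i x < 0" if i: "i \<in> {1..l}" for i
    proof (rule ccontr)
      assume "\<not> f i x < 0"
      then have z: "f i x = 0" using le i by force
      obtain v where v: "v \<in> tangent_space M x" "mdiff M (f i) x v \<noteq> 0"
        using sm i xM z unfolding regular_value0_def by blast
      obtain \<gamma> where g: "\<forall>t. \<gamma> t \<in> M" "\<gamma> 0 = x" "(\<gamma> has_vector_derivative v) (at 0)"
        using v(1) unfolding tangent_space_def by blast
      define D where "D = mdiff M (f i) x v"
      have der: "((f i \<circ> \<gamma>) has_real_derivative D) (at 0)"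
        unfolding D_def using mdiff_works[OF _ xM g] sm i by blast
      have "\<forall>\<^sub>F t in at 0. \<gamma> t \<in> U'"
        using ev_in[OF g(3) U'(1)] g(2) T(2) U'(2) by blast
      then have "\<forall>\<^sub>F t in at 0. (f i \<circ> \<gamma>) t \<le> 0"
      proof eventually_elim
        case (elim t)
        then have "\<gamma> t \<in> T" using U'(2) g(1) by blast
        then show ?case using T(3) i unfolding Edef by auto
      qed
      then obtain d where d: "d > 0" "\<forall>t. t \<noteq> 0 \<and> dist t 0 < d \<longrightarrow> (f i \<circ> \<gamma>) t \<le> 0"
        unfolding eventually_at by auto
      have F0: "(f i \<circ> \<gamma>) 0 = 0" using g(2) z by simp
      show False
      proof (cases "D > 0")
        case True
        obtain d2 where d2: "d2 > 0" "\<forall>h>0. h < d2 \<longrightarrow> (f i \<circ> \<gamma>) 0 < (f i \<circ> \<gamma>) (0 + h)"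
          using DERIV_pos_inc_right[OF der True] by blast
        define h where "h = min d d2 / 2"
        have "h > 0" "h < d2" "h < d" using d d2 unfolding h_def by auto
        then show False using d(2)[rule_format, of h] d2(2)[rule_format, of h] F0 by auto
      next
        case False
        then have Dn: "D < 0" using v(2) D_def by auto
        obtain d2 where d2: "d2 > 0" "\<forall>h>0. h < d2 \<longrightarrow> (f i \<circ> \<gamma>) 0 < (f i \<circ> \<gamma>) (0 - h)"
          using DERIV_neg_dec_left[OF der Dn] by blast
        define h where "h = min d d2 / 2"
        have "h > 0" "h < d2" "h < d" using d d2 unfolding h_def by auto
        then show False using d(2)[rule_format, of "-h"] d2(2)[rule_format, of h] F0 by auto
      qed
    qed
    then show "x \<in> I" unfolding I_def using xM by auto
  qed
  have int2: "I \<subseteq> (top_of_set M) interior_of E"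
    using interior_of_maximal[OF IE I_open] .
  have intEq: "(top_of_set M) interior_of E = I" using int1 int2 by blast
  have cl1: "(top_of_set M) closure_of I \<subseteq> E"
    using closure_of_minimal[OF IE E_closed] .
  have cl2: "E \<subseteq> (top_of_set M) closure_of I"
  proof
    fix x assume xE: "x \<in> E"
    then have xM: "x \<in> M" and le: "\<forall>i\<in>{1..l}. f i x \<le> 0" unfolding Edef by auto
    define J where "J = {j\<in>{1..l}. f j x = 0}"
    show "x \<in> (top_of_set M) closure_of I"
      unfolding in_closure_of
    proof (intro conjI allI impI)
      show "x \<in> topspace (top_of_set M)" using xM by simp
      fix T assume T: "x \<in> T \<and> openin (top_of_set M) T"
      obtain U' where U': "open U'" "T = M \<inter> U'" using T openin_open by blast
      show "\<exists>y. y \<in> I \<and> y \<in> T"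
      proof (cases "J = {}")
        case True
        then have "x \<in> I" unfolding I_def J_def using xM le by force
        then show ?thesis using T by blast
      next
        case False
        have Jsub: "J \<subseteq> {1..l}" and J0: "\<forall>j\<in>J. f j x = 0" unfolding J_def by auto
        have "diff_surj_sv_ge M f J x \<mu>"
          using R1[rule_format, of J x] Jsub False xE J0 by simp
        then obtain v where v: "v \<in> tangent_space M x" "\<forall>j\<in>J. mdiff M (f j) x v = (\<lambda>_::nat. -1::real) j"
          unfolding diff_surj_sv_ge_def by (elim allE[where x="\<lambda>_::nat. -1::real"] bexE conjE) blast
        obtain \<gamma> where g: "\<forall>t. \<gamma> t \<in> M" "\<gamma> 0 = x" "(\<gamma> has_vector_derivative v) (at 0)"
          using v(1) unfolding tangent_space_def by blast
        have evi: "\<forall>\<^sub>F t in at_right 0. f i (\<gamma> t) < 0" if i: "i \<in> {1..l}" for i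
        proof -
          have der: "((f i \<circ> \<gamma>) has_real_derivative mdiff M (f i) x v) (at 0)"
            using mdiff_works[OF _ xM g] sm i by blast
          show ?thesis
          proof (cases "i \<in> J")
            case True
            then have "mdiff M (f i) x v < 0" using v(2) by simp
            from DERIV_neg_dec_right[OF der this] obtain d where
              d: "d > 0" "\<forall>h>0. h < d \<longrightarrow> (f i \<circ> \<gamma>) 0 > (f i \<circ> \<gamma>) (0 + h)" by blast
            have F0: "(f i \<circ> \<gamma>) 0 = 0" using g(2) True unfolding J_def by simp
            show ?thesis unfolding eventually_at_right_field
              using d F0 by (intro exI[of _ d]) auto
          next
            case False
            then have neg: "f i x < 0" using le i unfolding J_def by force
            have "isCont (f i \<circ> \<gamma>) 0" using der by (rule DERIV_isCont)
            then have "((f i \<circ> \<gamma>) \<longlongrightarrow> (f i \<circ> \<gamma>) 0) (at_right 0)"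
              unfolding isCont_def by (rule tendsto_within_subset) simp
            then have "\<forall>\<^sub>F t in at_right 0. (f i \<circ> \<gamma>) t < 0"
              using neg g(2) by (intro order_tendstoD(2)) (auto simp: o_def)
            then show ?thesis by simp
          qed
        qed
        have evall: "\<forall>\<^sub>F t in at_right 0. \<forall>i\<in>{1..l}. f i (\<gamma> t) < 0"
          using evi by (intro eventually_ball_finite) auto
        have evU: "\<forall>\<^sub>F t in at_right (0::real). \<gamma> t \<in> U'"
          using ev_in[OF g(3) U'(1)] g(2) T U'(2) by blast
        have "\<exists>t. (\<forall>i\<in>{1..l}. f i (\<gamma> t) < 0) \<and> \<gamma> t \<in> U'"
          using eventually_happens'[OF _ eventually_conj[OF evall evU]] by simp
        then obtain t where t: "\<forall>i\<in>{1..l}. f i (\<gamma> t) < 0" "\<gamma> t \<in> U'" by blast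
        have "\<gamma> t \<in> I" using t g(1) unfolding I_def by auto
        moreover have "\<gamma> t \<in> T" using t g(1) U'(2) by auto
        ultimately show ?thesis by blast
      qed
    qed
  qed
  show ?thesis using intEq cl1 cl2 unfolding E_def[symmetric] I_def[symmetric] by blast
qed

end
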